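(* Let $\{x_k\}$ be generated by the IR-IG method with positive sequences $\{\gamma_k\}$, $\{\lambda_k\}$, and let $k\ge 1$ be such that $0<\gamma_k\lambda_k\mu_h\le 2m$. Then $$\|x_{k+1}-x_{\lambda_k}^*\|^2\le\left(1-\frac{\gamma_k\lambda_k\mu_h}{2m}\right)\|x_k-x_{\lambda_{k-1}}^*\|^2+\frac{3mC_h^2}{\gamma_k\lambda_k\mu_h^3}\left|1-\frac{\lambda_{k-1}}{\lambda_k}\right|^2+6m^2\gamma_k^2\left(C_f^2+\lambda_k^2C_h^2\right).$$
   Context: Standing setup: $X\subset\mathbb{R}^n$ is nonempty, compact and convex. $f_1,\dots,f_m:\mathbb{R}^n\to\mathbb{R}$ are convex (possibly nondifferentiable) functions and $f=\sum_{i=1}^m f_i$. $h:\mathbb{R}^n\to\mathbb{R}$ is strongly convex with parameter $\mu_h>0$ (possibly nondifferentiable), i.e. $h(y)\ge h(x)+g^T(y-x)+\frac{\mu_h}{2}\|y-x\|^2$ for all $x,y$ and all $g\in\partial h(x)$. For $\lambda>0$, $x_\lambda^*$ denotes the unique minimizer of $f+\lambda h$ over $X$. $C_f,C_h$ are constants such that $\|g\|\le C_f$ for every $g\in\partial f_i(x)$, $i=1,\dots,m$, $x\in X$, and $\|g\|\le C_h$ for every $g\in\partial h(x)$, $x\in X$. $\mathcal{P}_X$ denotes Euclidean projection onto $X$. IR-IG method: given $x_0\in X$ and positive sequences $\{\gamma_k\}$ (step sizes) and $\{\lambda_k\}$ (regularization parameters), for each $k\ge0$ set $x_{k,0}=x_k$;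 for $i=0,\dots,m-1$ pick any $g_{f_{i+1}}(x_{k,i})\in\partial f_{i+1}(x_{k,i})$ and $g_h(x_{k,i})\in\partial h(x_{k,i})$ and set $x_{k,i+1}=\mathcal{P}_X\big(x_{k,i}-\gamma_k\big(g_{f_{i+1}}(x_{k,i})+\tfrac{\lambda_k}{m}g_h(x_{k,i})\big)\big)$; then set $x_{k+1}=x_{k,m}$. *)

theory Defs
  imports "HOL-Analysis.Analysis"
begin

definition subdiff :: "('a::real_inner \<Rightarrow> real) \<Rightarrow> 'a \<Rightarrow> 'a set" where
  "subdiff F x = {g. \<forall>y. F y \<ge> F x + inner g (y - x)}"

definition strongly_convex :: "('a::real_inner \<Rightarrow> real) \<Rightarrow> real \<Rightarrow> bool" where
  "strongly_convex F mu \<longleftrightarrow> convex_on UNIV F \<and>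
     (\<forall>x y. \<forall>g\<in>subdiff F x. F y \<ge> F x + inner g (y - x) + mu / 2 * (norm (y - x))\<^sup>2)"

definition is_reg_min :: "'a set \<Rightarrow> ('a \<Rightarrow> real) \<Rightarrow> ('a \<Rightarrow> real) \<Rightarrow> real \<Rightarrow> 'a \<Rightarrow> bool" where
  "is_reg_min X f h lam z \<longleftrightarrow> z \<in> X \<and> (\<forall>y\<in>X. f z + lam * h z \<le> f y + lam * h y)"

end

theory Submission imports Defs begin

lemma subgrad_exists:
  fixes f :: "'a::euclidean_space \<Rightarrow> real"
  assumes cf: "convex_on UNIV f"
  shows "\<exists>g. g \<in> subdiff f a"
proof -
  define S :: "('a \<times> real) set" where "S = {a} \<times> {..<f a}"
  define T where "T = epigraph UNIV f"
  have "convex S" unfolding S_def by (intro convex_Times) auto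
  moreover have "convex T" unfolding T_def using cf by (rule convex_epigraphI)
  moreover have "S \<noteq> {}" unfolding S_def by (auto intro: exI[of _ "f a - 1"])
  moreover have "T \<noteq> {}" unfolding T_def epigraph_def by auto
  moreover have "S \<inter> T = {}" unfolding S_def T_def epigraph_def by auto
  ultimately obtain w b where w: "w \<noteq> 0" and hS: "\<forall>x\<in>S. inner w x \<le> b" and hT: "\<forall>x\<in>T. inner w x \<ge> b"
    using separating_hyperplane_sets by blast
  obtain v s where vs: "w = (v, s)" by (cases w)
  have T1: "inner v y + s * t \<ge> b" if "f y \<le> t" for y t
    using hT[rule_format, of "(y,t)"] that by (auto simp: T_def epigraph_def vs inner_Pair)
  have S1: "inner v a + s * t \<le> b" if "t < f a" for t
    using hS[rule_format, of "(a,t)"] that by (auto simp: S_def vs inner_Pair)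
  have s0: "s \<ge> 0"
  proof -
    have "inner v a + s * (f a - 1) \<le> b" using S1 by simp
    moreover have "inner v a + s * f a \<ge> b" using T1 by simp
    ultimately show ?thesis by (simp add: algebra_simps)
  qed
  have sne: "s \<noteq> 0"
  proof
    assume "s = 0"
    then have "v \<noteq> 0" using w vs by (auto simp: zero_prod_def)
    have "inner v a \<le> b" using S1[of "f a - 1"] \<open>s = 0\<close> by simp
    moreover have "inner v (a - v) \<ge> b" using T1[of "a - v" "f (a - v)"] \<open>s = 0\<close> by simp
    ultimately have "inner v v \<le> 0" by (simp add: inner_diff_right)
    then show False using \<open>v \<noteq> 0\<close> by (metis inner_gt_zero_iff not_le)
  qed
  with s0 have spos: "s > 0" by simp
  have key: "inner v a + s * f a \<le> b"
  proof (rule ccontr)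
    assume nk: "\<not> ?thesis"
    define e where "e = inner v a + s * f a - b"
    have e: "e > 0" using nk by (simp add: e_def)
    have "inner v a + s * (f a - e / (2 * s)) \<le> b" using S1 e spos by simp
    moreover have "s * (f a - e / (2 * s)) = s * f a - e / 2" using spos by (simp add: field_simps)
    ultimately have "inner v a + s * f a - e / 2 \<le> b" by linarith
    then show False using e e_def by linarith
  qed
  have "f y \<ge> f a + inner (- (1 / s) *\<^sub>R v) (y - a)" for y
  proof -
    have "inner v y + s * f y \<ge> inner v a + s * f a" using T1[of y "f y"] key by simp
    then have "s * f y \<ge> s * (f a + inner (- (1 / s) *\<^sub>R v) (y - a))"
      using spos by (simp add: inner_diff_right algebra_simps)
    then show ?thesis using spos by (simp add: mult_le_cancel_left_pos)
  qed
  then show ?thesis unfolding subdiff_def by blast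
qed

lemma convex_on_sum_fun:
  fixes fs :: "nat \<Rightarrow> 'a::real_vector \<Rightarrow> real"
  assumes "finite A" "\<And>i. i \<in> A \<Longrightarrow> convex_on UNIV (fs i)"
  shows "convex_on UNIV (\<lambda>y. \<Sum>i\<in>A. fs i y)"
  using assms
proof (induction A rule: finite_induct)
  case empty then show ?case by (simp add: convex_on_const)
next
  case (insert a A)
  then show ?case by (simp add: convex_on_add)
qed

lemma norm_sq_diff_scale:
  fixes a g :: "'a::real_inner"
  shows "(norm (a - c *\<^sub>R g))\<^sup>2 = (norm a)\<^sup>2 - 2 * c * inner g a + c\<^sup>2 * (norm g)\<^sup>2"
  unfolding power2_norm_eq_inner by (simp add: inner_diff_left inner_diff_right inner_commute algebra_simps power2_eq_square)

lemma strong_min: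
  fixes f h :: "'a::euclidean_space \<Rightarrow> real"
  assumes cf: "convex_on UNIV f" and hsc: "strongly_convex h mu" and l: "l > 0"
    and cX: "convex X" and z: "is_reg_min X f h l z" and y: "y \<in> X"
  shows "f y + l * h y - (f z + l * h z) \<ge> l * mu / 2 * (norm (y - z))\<^sup>2"
proof -
  define N where "N = (norm (y - z))\<^sup>2"
  define D where "D = f y + l * h y - (f z + l * h z)"
  have zX: "z \<in> X" and zmin: "\<And>u. u \<in> X \<Longrightarrow> f z + l * h z \<le> f u + l * h u"
    using z by (auto simp: is_reg_min_def)
  have ch: "convex_on UNIV h" using hsc by (simp add: strongly_convex_def)
  have bnd: "D \<ge> l * mu / 2 * (1 - t) * N" if t: "0 < t" "t \<le> 1" for t
  proof -
    define p where "p = z + t *\<^sub>R (y - z)"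
    have pe: "p = (1 - t) *\<^sub>R z + t *\<^sub>R y" by (simp add: p_def algebra_simps)
    have pX: "p \<in> X" unfolding pe using cX zX y t by (intro convexD) auto
    obtain g where g: "g \<in> subdiff h p" using subgrad_exists[OF ch] by blast
    have sc: "\<And>q. h q \<ge> h p + inner g (q - p) + mu / 2 * (norm (q - p))\<^sup>2"
      using hsc g by (simp add: strongly_convex_def)
    define G where "G = inner g (y - z)"
    have yp: "y - p = (1 - t) *\<^sub>R (y - z)" by (simp add: p_def algebra_simps)
    have zp: "z - p = (- t) *\<^sub>R (y - z)" by (simp add: p_def algebra_simps)
    have e1: "h y \<ge> h p + (1 - t) * G + mu / 2 * ((1 - t)\<^sup>2 * N)"
      using sc[of y] unfolding yp G_def N_def by (simp add: power_mult_distrib)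
    have e2: "h z \<ge> h p - t * G + mu / 2 * (t\<^sup>2 * N)"
      using sc[of z] unfolding zp G_def N_def by (simp add: power_mult_distrib)
    have e1': "t * h y \<ge> t * (h p + (1 - t) * G + mu / 2 * ((1 - t)\<^sup>2 * N))"
      using e1 t by (intro mult_left_mono) auto
    have e2': "(1 - t) * h z \<ge> (1 - t) * (h p - t * G + mu / 2 * (t\<^sup>2 * N))"
      using e2 t by (intro mult_left_mono) auto
    have hp: "h p \<le> t * h y + (1 - t) * h z - mu / 2 * t * (1 - t) * N"
    proof -
      have "t * (h p + (1 - t) * G + mu / 2 * ((1 - t)\<^sup>2 * N)) + (1 - t) * (h p - t * G + mu / 2 * (t\<^sup>2 * N))
          = h p + mu / 2 * t * (1 - t) * N"
        by (simp add: field_simps power2_eq_square)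
      then show ?thesis using e1' e2' by linarith
    qed
    have fp: "f p \<le> (1 - t) * f z + t * f y"
      unfolding pe using cf t by (intro convex_onD) auto
    have "f z + l * h z \<le> f p + l * h p" using zmin[OF pX] .
    also have "l * h p \<le> l * (t * h y + (1 - t) * h z - mu / 2 * t * (1 - t) * N)"
      using hp l by (intro mult_left_mono) auto
    finally have "f z + l * h z \<le> (1 - t) * f z + t * f y + l * (t * h y + (1 - t) * h z - mu / 2 * t * (1 - t) * N)"
      using fp by linarith
    then have "t * (l * mu / 2 * (1 - t) * N) \<le> t * D"
      by (simp add: D_def algebra_simps)
    then show ?thesis using t by simp
  qed
  show ?thesis
  proof (rule ccontr)
    assume "\<not> ?thesis"
    then have lt: "D < l * mu / 2 * N" by (simp add: D_def N_def)
    have D0: "D \<ge> 0" using bnd[of 1] by simp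
    define c where "c = l * mu / 2 * N"
    have cpos: "c > 0" using lt D0 by (simp add: c_def)
    define t where "t = (c - D) / (2 * c)"
    have t: "0 < t" "t \<le> 1" using cpos lt D0 by (auto simp: t_def c_def field_simps)
    have "D \<ge> c * (1 - t)" using bnd[OF t] by (simp add: c_def mult_ac)
    moreover have "c * (1 - t) = (c + D) / 2" using cpos by (simp add: t_def field_simps)
    ultimately show False using lt by (simp add: c_def)
  qed
qed

theorem lemma2:
  fixes X :: "(real ^ 'n) set"
    and fs :: "nat \<Rightarrow> real ^ 'n \<Rightarrow> real"
    and h :: "real ^ 'n \<Rightarrow> real"
    and m :: nat and mu Cf Ch :: real
    and xstar :: "real \<Rightarrow> real ^ 'n"
    and gam lam :: "nat \<Rightarrow> real"
    and x :: "nat \<Rightarrow> real ^ 'n"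
    and xi :: "nat \<Rightarrow> nat \<Rightarrow> real ^ 'n"
    and gf gh :: "nat \<Rightarrow> nat \<Rightarrow> real ^ 'n"
    and k :: nat
  assumes X: "X \<noteq> {}" "compact X" "convex X"
    and m: "m \<ge> 1"
    and fconv: "\<And>i. i \<in> {1..m} \<Longrightarrow> convex_on UNIV (fs i)"
    and mu: "mu > 0" and hsc: "strongly_convex h mu"
    and xstar: "\<And>l. l > 0 \<Longrightarrow> is_reg_min X (\<lambda>z. \<Sum>i=1..m. fs i z) h l (xstar l)"
    and Cf: "\<And>i z g. i \<in> {1..m} \<Longrightarrow> z \<in> X \<Longrightarrow> g \<in> subdiff (fs i) z \<Longrightarrow> norm g \<le> Cf"
    and Ch: "\<And>z g. z \<in> X \<Longrightarrow> g \<in> subdiff h z \<Longrightarrow> norm g \<le> Ch"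
    and gam_pos: "\<And>j. gam j > 0" and lam_pos: "\<And>j. lam j > 0"
    and x0: "x 0 \<in> X"
    and inner0: "\<And>j. xi j 0 = x j"
    and gf: "\<And>j i. i < m \<Longrightarrow> gf j i \<in> subdiff (fs (Suc i)) (xi j i)"
    and gh: "\<And>j i. i < m \<Longrightarrow> gh j i \<in> subdiff h (xi j i)"
    and step: "\<And>j i. i < m \<Longrightarrow>
       xi j (Suc i) = closest_point X (xi j i - gam j *\<^sub>R (gf j i + (lam j / real m) *\<^sub>R gh j i))"
    and outer: "\<And>j. x (Suc j) = xi j m"
    and k: "k \<ge> 1"
    and kstep: "0 < gam k * lam k * mu" "gam k * lam k * mu \<le> 2 * real m"
  shows "(norm (x (Suc k) - xstar (lam k)))\<^sup>2
    \<le> (1 - gam k * lam k * mu / (2 * real m)) * (norm (x k - xstar (lam (k - 1))))\<^sup>2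
      + 3 * real m * Ch\<^sup>2 / (gam k * lam k * mu ^ 3) * \<bar>1 - lam (k - 1) / lam k\<bar>\<^sup>2
      + 6 * (real m)\<^sup>2 * (gam k)\<^sup>2 * (Cf\<^sup>2 + (lam k)\<^sup>2 * Ch\<^sup>2)"
proof -
  define l where "l = lam k"
  define l' where "l' = lam (k - 1)"
  define gm where "gm = gam k"
  define M where "M = real m"
  define z where "z = xstar l"
  define z' where "z' = xstar l'"
  define f where "f = (\<lambda>y. \<Sum>i=1..m. fs i y)"
  define G where "G = Cf + l / M * Ch"
  define g where "g = (\<lambda>i. gf k i + (l / M) *\<^sub>R gh k i)"
  define w where "w = (\<lambda>i. xi k i)"
  define F where "F = (\<lambda>i y. fs (Suc i) y + l / M * h y)"
  have M1: "M \<ge> 1" using m by (simp add: M_def)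
  have lpos: "l > 0" "l' > 0" using lam_pos by (auto simp: l_def l'_def)
  have gpos: "gm > 0" using gam_pos by (simp add: gm_def)
  have clX: "closed X" using X(2) compact_imp_closed by blast
  have cf: "convex_on UNIV f" unfolding f_def by (rule convex_on_sum_fun) (auto intro: fconv)
  have ch: "convex_on UNIV h" using hsc by (simp add: strongly_convex_def)
  obtain m' where mm: "m = Suc m'" using m by (cases m) auto
  have xX: "x j \<in> X" for j
  proof (cases j)
    case 0 with x0 show ?thesis by simp
  next
    case (Suc j')
    then show ?thesis using outer[of j'] step[of m' j'] mm closest_point_in_set[OF clX X(1)] by auto
  qed
  have wX: "w i \<in> X" if "i \<le> m" for i
  proof (cases i)
    case 0 with xX inner0 show ?thesis by (simp add: w_def)
  next
    case (Suc i')
    then show ?thesis using step[of i' k] that closest_point_in_set[OF clX X(1)] by (auto simp: w_def)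
  qed
  have nonexp: "norm (closest_point X u - q) \<le> norm (u - q)" if "q \<in> X" for u q
    using closest_point_lipschitz[OF X(3) clX X(1), of u q] closest_point_self[OF that] by (simp add: dist_norm)
  have zX: "z \<in> X" and zmin: "is_reg_min X f h l z"
    using xstar[OF lpos(1)] by (auto simp: z_def f_def is_reg_min_def)
  have z'X: "z' \<in> X" and z'min: "is_reg_min X f h l' z'"
    using xstar[OF lpos(2)] by (auto simp: z'_def f_def is_reg_min_def)
  have Cf0: "Cf \<ge> 0"
  proof -
    have "convex_on UNIV (fs 1)" using fconv m by auto
    then obtain s where "s \<in> subdiff (fs 1) (x k)" using subgrad_exists by blast
    then have "norm s \<le> Cf" using Cf[of 1 "x k" s] xX m by auto
    then show ?thesis using norm_ge_zero order_trans by blast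
  qed
  have Ch0: "Ch \<ge> 0"
  proof -
    obtain s where "s \<in> subdiff h (x k)" using subgrad_exists[OF ch] by blast
    then have "norm s \<le> Ch" using Ch[of "x k" s] xX by auto
    then show ?thesis using norm_ge_zero order_trans by blast
  qed
  have lM0: "l / M \<ge> 0" using lpos M1 by simp
  have G0: "G \<ge> 0" unfolding G_def using Cf0 mult_nonneg_nonneg[OF lM0 Ch0] by linarith
  have gfb: "norm (gf k i) \<le> Cf" if "i < m" for i
    using Cf[of "Suc i" "xi k i" "gf k i"] gf[OF that] wX[of i] that by (auto simp: w_def)
  have ghb: "norm (gh k i) \<le> Ch" if "i < m" for i
    using Ch[of "xi k i" "gh k i"] gh[OF that] wX[of i] that by (auto simp: w_def)
  have gb: "norm (g i) \<le> G" if "i < m" for i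
  proof -
    have "norm (g i) \<le> norm (gf k i) + norm ((l / M) *\<^sub>R gh k i)" unfolding g_def by (rule norm_triangle_ineq)
    also have "\<dots> = norm (gf k i) + l / M * norm (gh k i)" using lpos M1 by simp
    also have "\<dots> \<le> Cf + l / M * Ch" using gfb[OF that] ghb[OF that] lM0 by (intro add_mono mult_left_mono) auto
    finally show ?thesis by (simp add: G_def)
  qed
  have wstep: "w (Suc i) = closest_point X (w i - gm *\<^sub>R g i)" if "i < m" for i
    using step[OF that, of k] by (simp add: w_def gm_def g_def l_def M_def)
  have d1: "norm (w (Suc i) - w i) \<le> gm * G" if "i < m" for i
  proof -
    have "norm (w (Suc i) - w i) \<le> norm (w i - gm *\<^sub>R g i - w i)"
      unfolding wstep[OF that] using wX[of i] that by (intro nonexp) auto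
    also have "\<dots> = gm * norm (g i)" using gpos by simp
    also have "\<dots> \<le> gm * G" using gb[OF that] gpos by simp
    finally show ?thesis .
  qed
  have d1': "norm (w i - x k) \<le> real i * gm * G" if "i \<le> m" for i
    using that
  proof (induction i)
    case 0 then show ?case by (simp add: w_def inner0)
  next
    case (Suc i)
    have "w (Suc i) - x k = (w (Suc i) - w i) + (w i - x k)" by simp
    then have "norm (w (Suc i) - x k) \<le> norm (w (Suc i) - w i) + norm (w i - x k)"
      by (metis norm_triangle_ineq)
    also have "\<dots> \<le> gm * G + real i * gm * G" using Suc d1[of i] by (intro add_mono) auto
    finally show ?case by (simp add: algebra_simps)
  qed
  have d2: "(norm (w (Suc i) - z))\<^sup>2 \<le> (norm (w i - z))\<^sup>2 - 2 * gm * inner (g i) (w i - z) + gm\<^sup>2 * G\<^sup>2"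
    if "i < m" for i
  proof -
    have "norm (w (Suc i) - z) \<le> norm ((w i - z) - gm *\<^sub>R g i)"
    proof -
      have eq: "(w i - z) - gm *\<^sub>R g i = (w i - gm *\<^sub>R g i) - z" by (simp add: algebra_simps)
      show ?thesis unfolding wstep[OF that] eq by (rule nonexp[OF zX])
    qed
    then have "(norm (w (Suc i) - z))\<^sup>2 \<le> (norm ((w i - z) - gm *\<^sub>R g i))\<^sup>2"
      by (intro power_mono) auto
    also have "\<dots> = (norm (w i - z))\<^sup>2 - 2 * gm * inner (g i) (w i - z) + gm\<^sup>2 * (norm (g i))\<^sup>2"
      by (rule norm_sq_diff_scale)
    also have "gm\<^sup>2 * (norm (g i))\<^sup>2 \<le> gm\<^sup>2 * G\<^sup>2"
      using gb[OF that] by (intro mult_left_mono power_mono) auto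
    finally show ?thesis by linarith
  qed
  have sg: "inner (g i) (w i - z) \<ge> F i (w i) - F i z" if "i < m" for i
  proof -
    have a1: "fs (Suc i) z \<ge> fs (Suc i) (w i) + inner (gf k i) (z - w i)"
      using gf[OF that, of k] by (simp add: subdiff_def w_def)
    have a2: "h z \<ge> h (w i) + inner (gh k i) (z - w i)"
      using gh[OF that, of k] by (simp add: subdiff_def w_def)
    have a3: "l / M * h z \<ge> l / M * (h (w i) + inner (gh k i) (z - w i))"
      using a2 lM0 by (rule mult_left_mono)
    have e: "inner (g i) (w i - z) = - inner (gf k i) (z - w i) - l / M * inner (gh k i) (z - w i)"
      unfolding g_def by (simp add: inner_add_left inner_diff_right algebra_simps)
    show ?thesis using a1 a3 e unfolding F_def by (simp add: algebra_simps)
  qed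
  have lip: "F i (w i) \<ge> F i (x k) - G * norm (w i - x k)" if "i < m" for i
  proof -
    have "convex_on UNIV (fs (Suc i))" using fconv that by auto
    then obtain s where s: "s \<in> subdiff (fs (Suc i)) (x k)" using subgrad_exists by blast
    have iin: "Suc i \<in> {1..m}" using that by auto
    have sn: "norm s \<le> Cf" using Cf[OF iin xX s] .
    have ghk: "gh k 0 \<in> subdiff h (x k)" using gh[of 0 k] m inner0 by simp
    have hn: "norm (gh k 0) \<le> Ch" using Ch[OF xX ghk] .
    have b1: "fs (Suc i) (w i) \<ge> fs (Suc i) (x k) + inner s (w i - x k)" using s by (simp add: subdiff_def)
    have b2: "h (w i) \<ge> h (x k) + inner (gh k 0) (w i - x k)" using ghk by (simp add: subdiff_def)
    have c1: "inner s (w i - x k) \<ge> - (Cf * norm (w i - x k))"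
    proof -
      have "\<bar>inner s (w i - x k)\<bar> \<le> norm s * norm (w i - x k)" by (rule Cauchy_Schwarz_ineq2)
      also have "\<dots> \<le> Cf * norm (w i - x k)" using sn by (intro mult_right_mono) auto
      finally show ?thesis by linarith
    qed
    have c2: "inner (gh k 0) (w i - x k) \<ge> - (Ch * norm (w i - x k))"
    proof -
      have "\<bar>inner (gh k 0) (w i - x k)\<bar> \<le> norm (gh k 0) * norm (w i - x k)" by (rule Cauchy_Schwarz_ineq2)
      also have "\<dots> \<le> Ch * norm (w i - x k)" using hn by (intro mult_right_mono) auto
      finally show ?thesis by linarith
    qed
    have c3: "l / M * h (w i) \<ge> l / M * (h (x k) - Ch * norm (w i - x k))"
      using b2 c2 lM0 by (intro mult_left_mono) auto
    have q: "F i (w i) - (F i (x k) - G * norm (w i - x k)) = (fs (Suc i) (w i) - fs (Suc i) (x k) + Cf * norm (w i - x k)) + (l / M * h (w i) - l / M * (h (x k) - Ch * norm (w i - x k)))"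
      by (simp add: F_def G_def algebra_simps)
    show ?thesis using b1 c1 c3 q by linarith
  qed
  have ind: "(norm (w n - z))\<^sup>2 \<le> (norm (x k - z))\<^sup>2 - 2 * gm * (\<Sum>i<n. F i (x k) - F i z) + gm\<^sup>2 * G\<^sup>2 * (real n)\<^sup>2"
    if "n \<le> m" for n
    using that
  proof (induction n)
    case 0 then show ?case by (simp add: w_def inner0)
  next
    case (Suc n)
    then have n: "n < m" "n \<le> m" by auto
    have q1: "G * norm (w n - x k) \<le> G * (real n * gm * G)" using d1'[OF n(2)] G0 by (rule mult_left_mono)
    have q2: "inner (g n) (w n - z) \<ge> (F n (x k) - F n z) - G * (real n * gm * G)"
      using sg[OF n(1)] lip[OF n(1)] q1 by linarith
    have q3: "2 * gm * inner (g n) (w n - z) \<ge> 2 * gm * ((F n (x k) - F n z) - G * (real n * gm * G))"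
      using q2 gpos by (intro mult_left_mono) auto
    have e1: "2 * gm * ((F n (x k) - F n z) - G * (real n * gm * G)) = 2 * gm * (F n (x k) - F n z) - 2 * gm\<^sup>2 * G\<^sup>2 * real n"
      by (simp add: algebra_simps power2_eq_square)
    have e2: "gm\<^sup>2 * G\<^sup>2 * (real (Suc n))\<^sup>2 = gm\<^sup>2 * G\<^sup>2 * (real n)\<^sup>2 + 2 * gm\<^sup>2 * G\<^sup>2 * real n + gm\<^sup>2 * G\<^sup>2"
      by (simp add: algebra_simps power2_eq_square)
    have e3: "2 * gm * (\<Sum>i<Suc n. F i (x k) - F i z) = 2 * gm * (\<Sum>i<n. F i (x k) - F i z) + 2 * gm * (F n (x k) - F n z)"
      by (simp add: algebra_simps)
    show ?case using Suc.IH[OF n(2)] d2[OF n(1)] q3 e1 e2 e3 by linarith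
  qed
  have sumF: "(\<Sum>i<m. F i y) = f y + l * h y" for y
  proof -
    have "(\<Sum>i<m. F i y) = (\<Sum>i<m. fs (Suc i) y) + (\<Sum>i<m. l / M * h y)"
      unfolding F_def by (rule sum.distrib)
    also have "(\<Sum>i<m. fs (Suc i) y) = f y" unfolding f_def using sum.atLeast1_atMost_eq[of "\<lambda>i. fs i y" m] by simp
    also have "(\<Sum>i<m. l / M * h y) = l * h y" using M1 by (simp add: M_def)
    finally show ?thesis .
  qed
  have E1: "(norm (x (Suc k) - z))\<^sup>2 \<le> (norm (x k - z))\<^sup>2 - 2 * gm * (f (x k) + l * h (x k) - (f z + l * h z)) + gm\<^sup>2 * G\<^sup>2 * M\<^sup>2"
    using ind[of m] outer[of k] by (simp add: w_def sum_subtractf sumF M_def)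
  have E2: "f (x k) + l * h (x k) - (f z + l * h z) \<ge> l * mu / 2 * (norm (x k - z))\<^sup>2"
    by (rule strong_min[OF cf hsc lpos(1) X(3) zmin xX])
  define a where "a = gm * l * mu"
  define A where "A = (norm (x k - z))\<^sup>2"
  define b where "b = norm (x k - z')"
  define d where "d = norm (z - z')"
  have apos: "a > 0" unfolding a_def using kstep by (simp add: gm_def l_def)
  have a2M: "a \<le> 2 * M" unfolding a_def using kstep by (simp add: gm_def l_def M_def)
  have E12: "(norm (x (Suc k) - z))\<^sup>2 \<le> (1 - a) * A + gm\<^sup>2 * G\<^sup>2 * M\<^sup>2"
  proof -
    have "2 * gm * (f (x k) + l * h (x k) - (f z + l * h z)) \<ge> 2 * gm * (l * mu / 2 * A)"
      using E2 gpos unfolding A_def by (intro mult_left_mono) auto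
    moreover have "2 * gm * (l * mu / 2 * A) = a * A" by (simp add: a_def)
    moreover have "(1 - a) * A = A - a * A" by (simp add: algebra_simps)
    ultimately show ?thesis using E1[folded A_def] by linarith
  qed
  have E3: "gm\<^sup>2 * G\<^sup>2 * M\<^sup>2 \<le> 6 * M\<^sup>2 * gm\<^sup>2 * (Cf\<^sup>2 + l\<^sup>2 * Ch\<^sup>2)"
  proof -
    have GM: "G * M = M * Cf + l * Ch" using M1 by (simp add: G_def field_simps)
    have "(M * Cf + l * Ch)\<^sup>2 \<le> 2 * (M * Cf)\<^sup>2 + 2 * (l * Ch)\<^sup>2"
      using sum_squares_ge_zero[of "M * Cf - l * Ch" 0] by (simp add: algebra_simps power2_eq_square)
    also have "\<dots> \<le> 6 * M\<^sup>2 * (Cf\<^sup>2 + l\<^sup>2 * Ch\<^sup>2)"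
    proof -
      have M2: "1 \<le> M\<^sup>2" using M1 by (simp add: one_le_power)
      have "1 * (l * Ch)\<^sup>2 \<le> M\<^sup>2 * (l * Ch)\<^sup>2" using M2 by (intro mult_right_mono) auto
      moreover have "6 * M\<^sup>2 * (Cf\<^sup>2 + l\<^sup>2 * Ch\<^sup>2) = 6 * (M * Cf)\<^sup>2 + 6 * (M\<^sup>2 * (l * Ch)\<^sup>2)"
        by (simp add: algebra_simps power_mult_distrib)
      moreover have "(M * Cf)\<^sup>2 \<ge> 0" by simp
      moreover have "(l * Ch)\<^sup>2 \<ge> 0" by simp
      ultimately show ?thesis by linarith
    qed
    finally have "(G * M)\<^sup>2 \<le> 6 * M\<^sup>2 * (Cf\<^sup>2 + l\<^sup>2 * Ch\<^sup>2)" using GM by simp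
    then have "gm\<^sup>2 * (G * M)\<^sup>2 \<le> gm\<^sup>2 * (6 * M\<^sup>2 * (Cf\<^sup>2 + l\<^sup>2 * Ch\<^sup>2))" by (intro mult_left_mono) auto
    then show ?thesis by (simp add: algebra_simps power_mult_distrib)
  qed
  have E4: "d \<le> Ch * \<bar>l - l'\<bar> / (l * mu)"
  proof -
    have d0: "d \<ge> 0" by (simp add: d_def)
    have dz: "norm (z' - z) = d" by (simp add: d_def norm_minus_commute)
    have P1: "f z' + l * h z' - (f z + l * h z) \<ge> l * mu / 2 * d\<^sup>2"
      using strong_min[OF cf hsc lpos(1) X(3) zmin z'X] dz by simp
    have P2: "f z + l' * h z - (f z' + l' * h z') \<ge> l' * mu / 2 * d\<^sup>2"
      using strong_min[OF cf hsc lpos(2) X(3) z'min zX] by (simp add: d_def)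
    define u where "u = h z' - h z"
    have P: "(l - l') * u \<ge> (l + l') * mu / 2 * d\<^sup>2"
    proof -
      have "(l - l') * u = (l * h z' - l * h z) + (l' * h z - l' * h z')" by (simp add: u_def algebra_simps)
      moreover have "(l + l') * mu / 2 * d\<^sup>2 = l * mu / 2 * d\<^sup>2 + l' * mu / 2 * d\<^sup>2" by (simp add: algebra_simps)
      ultimately show ?thesis using P1 P2 by linarith
    qed
    have H1: "u \<le> Ch * d - mu / 2 * d\<^sup>2"
    proof -
      obtain q where q: "q \<in> subdiff h z'" using subgrad_exists[OF ch] by blast
      have qn: "norm q \<le> Ch" using Ch[OF z'X q] .
      have "h z \<ge> h z' + inner q (z - z') + mu / 2 * (norm (z - z'))\<^sup>2" using hsc q by (simp add: strongly_convex_def)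
      moreover have "\<bar>inner q (z - z')\<bar> \<le> norm q * norm (z - z')" by (rule Cauchy_Schwarz_ineq2)
      moreover have "norm q * norm (z - z') \<le> Ch * norm (z - z')" using qn by (intro mult_right_mono) auto
      ultimately show ?thesis unfolding u_def d_def by linarith
    qed
    have H2: "- u \<le> Ch * d - mu / 2 * d\<^sup>2"
    proof -
      obtain q where q: "q \<in> subdiff h z" using subgrad_exists[OF ch] by blast
      have qn: "norm q \<le> Ch" using Ch[OF zX q] .
      have "h z' \<ge> h z + inner q (z' - z) + mu / 2 * (norm (z' - z))\<^sup>2" using hsc q by (simp add: strongly_convex_def)
      moreover have "\<bar>inner q (z' - z)\<bar> \<le> norm q * norm (z' - z)" by (rule Cauchy_Schwarz_ineq2)
      moreover have "norm q * norm (z' - z) \<le> Ch * norm (z' - z)" using qn by (intro mult_right_mono) auto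
      ultimately show ?thesis unfolding u_def dz by linarith
    qed
    have key: "l * mu * d\<^sup>2 \<le> \<bar>l - l'\<bar> * Ch * d"
    proof (cases "l' \<le> l")
      case True
      have i1: "(l + l') * mu / 2 * d\<^sup>2 \<le> (l - l') * Ch * d - (l - l') * mu / 2 * d\<^sup>2"
      proof -
        have "(l + l') * mu / 2 * d\<^sup>2 \<le> (l - l') * u" by (rule P)
        also have "\<dots> \<le> (l - l') * (Ch * d - mu / 2 * d\<^sup>2)" using H1 True by (intro mult_left_mono) auto
        also have "\<dots> = (l - l') * Ch * d - (l - l') * mu / 2 * d\<^sup>2" by (simp add: algebra_simps)
        finally show ?thesis .
      qed
      have "l * mu * d\<^sup>2 = (l + l') * mu / 2 * d\<^sup>2 + (l - l') * mu / 2 * d\<^sup>2" by (simp add: field_simps)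
      also have "\<dots> \<le> (l - l') * Ch * d" using i1 by linarith
      also have "\<dots> = \<bar>l - l'\<bar> * Ch * d" using True by simp
      finally show ?thesis .
    next
      case False
      have i1: "(l + l') * mu / 2 * d\<^sup>2 \<le> (l' - l) * Ch * d - (l' - l) * mu / 2 * d\<^sup>2"
      proof -
        have "(l + l') * mu / 2 * d\<^sup>2 \<le> (l - l') * u" by (rule P)
        also have "\<dots> = (l' - l) * (- u)" by (simp add: algebra_simps)
        also have "\<dots> \<le> (l' - l) * (Ch * d - mu / 2 * d\<^sup>2)" using H2 False by (intro mult_left_mono) auto
        also have "\<dots> = (l' - l) * Ch * d - (l' - l) * mu / 2 * d\<^sup>2" by (simp add: algebra_simps)
        finally show ?thesis .
      qed
      have "l * mu * d\<^sup>2 \<le> l' * mu * d\<^sup>2" using False mu by (intro mult_right_mono) auto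
      also have "l' * mu * d\<^sup>2 = (l + l') * mu / 2 * d\<^sup>2 + (l' - l) * mu / 2 * d\<^sup>2" by (simp add: field_simps)
      also have "\<dots> \<le> (l' - l) * Ch * d" using i1 by linarith
      also have "\<dots> = \<bar>l - l'\<bar> * Ch * d" using False by simp
      finally show ?thesis .
    qed
    show ?thesis
    proof (cases "d = 0")
      case True then show ?thesis using Ch0 lpos mu by simp
    next
      case False
      then have dp: "d > 0" using d0 by simp
      have "l * mu * d * d \<le> \<bar>l - l'\<bar> * Ch * d" using key by (simp add: power2_eq_square mult.assoc)
      then have "l * mu * d \<le> \<bar>l - l'\<bar> * Ch" using dp by (simp add: mult_le_cancel_right_pos)
      then show ?thesis using lpos mu by (simp add: pos_le_divide_eq mult_ac)
    qed
  qed
  have E5: "(1 - a) * A \<le> (1 - a / (2 * M)) * b\<^sup>2 + 2 / a * d\<^sup>2"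
  proof -
    have d0: "d \<ge> 0" by (simp add: d_def)
    have b0: "b \<ge> 0" by (simp add: b_def)
    have c0: "1 - a / (2 * M) \<ge> 0" using a2M M1 by simp
    have "x k - z = (x k - z') + (z' - z)" by simp
    then have "norm (x k - z) \<le> b + d" unfolding b_def d_def by (metis norm_minus_commute norm_triangle_ineq)
    then have AA: "A \<le> (b + d)\<^sup>2" unfolding A_def by (intro power_mono) auto
    show ?thesis
    proof (cases "a \<ge> 1")
      case True
      have "(1 - a) * A \<le> 0" using True by (simp add: A_def mult_nonpos_nonneg)
      moreover have "0 \<le> (1 - a / (2 * M)) * b\<^sup>2 + 2 / a * d\<^sup>2" using c0 apos by simp
      ultimately show ?thesis by linarith
    next
      case False
      have "(1 - a) * A \<le> (1 - a) * (b + d)\<^sup>2" using AA False by (intro mult_left_mono) auto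
      also have "(b + d)\<^sup>2 \<le> (1 + a / 2) * b\<^sup>2 + (1 + 2 / a) * d\<^sup>2"
      proof -
        have "0 \<le> (a * b - 2 * d)\<^sup>2 / (2 * a)" using apos by simp
        also have "(a * b - 2 * d)\<^sup>2 / (2 * a) = a / 2 * b\<^sup>2 + 2 / a * d\<^sup>2 - 2 * b * d"
          using apos by (simp add: field_simps power2_eq_square)
        finally show ?thesis by (simp add: algebra_simps power2_eq_square)
      qed
      then have "(1 - a) * (b + d)\<^sup>2 \<le> (1 - a) * ((1 + a / 2) * b\<^sup>2 + (1 + 2 / a) * d\<^sup>2)"
        using False by (intro mult_left_mono) auto
      also have "\<dots> = ((1 - a) * (1 + a / 2)) * b\<^sup>2 + ((1 - a) * (1 + 2 / a)) * d\<^sup>2" by (simp add: algebra_simps)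
      also have "\<dots> \<le> (1 - a / (2 * M)) * b\<^sup>2 + 2 / a * d\<^sup>2"
      proof (intro add_mono mult_right_mono)
        have "(1 - a) * (1 + a / 2) = 1 - a / 2 - a\<^sup>2 / 2" by (simp add: field_simps power2_eq_square)
        moreover have "a / (2 * M) \<le> a / 2" using apos M1 by (intro divide_left_mono) auto
        moreover have "a\<^sup>2 / 2 \<ge> 0" by simp
        ultimately show "(1 - a) * (1 + a / 2) \<le> 1 - a / (2 * M)" by linarith
        have "(1 - a) * (1 + 2 / a) = 2 / a - 1 - a" using apos by (simp add: field_simps)
        then show "(1 - a) * (1 + 2 / a) \<le> 2 / a" using apos by simp
      qed auto
      finally show ?thesis .
    qed
  qed
  have E6: "2 / a * d\<^sup>2 \<le> 3 * real m * Ch\<^sup>2 / (gam k * lam k * mu ^ 3) * \<bar>1 - lam (k - 1) / lam k\<bar>\<^sup>2"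
  proof -
    have d0: "d \<ge> 0" by (simp add: d_def)
    have "d\<^sup>2 \<le> (Ch * \<bar>l - l'\<bar> / (l * mu))\<^sup>2" using E4 d0 by (intro power_mono) auto
    then have "2 / a * d\<^sup>2 \<le> 2 / a * (Ch * \<bar>l - l'\<bar> / (l * mu))\<^sup>2" using apos by (intro mult_left_mono) auto
    also have "\<dots> \<le> 3 * M / a * (Ch * \<bar>l - l'\<bar> / (l * mu))\<^sup>2"
      using apos M1 by (intro mult_right_mono divide_right_mono) auto
    also have "\<bar>1 - l' / l\<bar> = \<bar>l - l'\<bar> / l" using lpos
      by (metis abs_divide abs_of_pos diff_divide_distrib divide_self_if less_irrefl)
    then have "3 * M / a * (Ch * \<bar>l - l'\<bar> / (l * mu))\<^sup>2 = 3 * real m * Ch\<^sup>2 / (gm * l * mu ^ 3) * \<bar>1 - l' / l\<bar>\<^sup>2"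
      using lpos mu gpos by (simp add: a_def M_def field_simps power2_eq_square power3_eq_cube)
    finally show ?thesis by (simp add: gm_def l_def l'_def)
  qed
  have fin: "(norm (x (Suc k) - z))\<^sup>2 \<le> (1 - a / (2 * M)) * b\<^sup>2 + 3 * real m * Ch\<^sup>2 / (gam k * lam k * mu ^ 3) * \<bar>1 - lam (k - 1) / lam k\<bar>\<^sup>2 + 6 * M\<^sup>2 * gm\<^sup>2 * (Cf\<^sup>2 + l\<^sup>2 * Ch\<^sup>2)"
    using E12 E3 E5 E6 by linarith
  then show ?thesis unfolding a_def b_def M_def gm_def l_def l'_def z_def z'_def by (simp add: mult_ac)
qed

end
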